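(* Let $L=\{0,1,\dots,m\}^n$ ordered componentwise, with top $\top=(m,\dots,m)$, and let $f_1,\dots,f_n:L\to L$ be monotone and deflationary. (a) Any non-interleaving execution with update-only-on-change starting from $G_0=\top$ under a fair scheduler is eventually constant at the greatest common fixed point of $\{f_1,\dots,f_n\}$. (b) If moreover each $f_i$ is $i$-local, then any distributed execution starting from $G_0=\top$ with views satisfying bounded staleness with parameter $T$ and a strongly fair scheduler with parameter $\tau$ is eventually constant at the greatest common fixed point of $\{f_1,\dots,f_n\}$.
   Context: A function $f$ is deflationary if $f(G)\le G$ for all $G$, monotone if $G\le H\Rightarrow f(G)\le f(H)$; $f_i$ is $i$-local if $f_i(G)[j]=G[j]$ for all $G$ and $j\ne i$. Non-interleaving execution with update-only-on-change: rounds $t=0,1,\dots$ with committed states $G_t$; in round $t$ each $f_i$, $i\in S_t$, runs concurrently, reading a vector $X$ whose coordinate $X[k]$ is either $G_t[k]$ or the value of some write to coordinate $k$ during the round, computing $H=f_i(X)$, and writing $H[k]$ to coordinate $k$ if and only if $H[k]\ne X[k]$; $G_{t+1}[k]=G_t[k]$ if no write to $k$ occurred, otherwise it is the value of one of the writes to $k$ in the round. Fair: each $i$ is in $S_t$ for infinitely many $t$. Distributed execution: $G_{t+1}[i]=f_i(\widehat G^{(i)}_t)[i]$ for $i\in S_t$, $G_{t+1}[j]=G_t[j]$ otherwise; bounded staleness with parameter $T$ means $\widehat G^{(i)}_t[i]=G_t[i]$ and $\widehat G^{(i)}_t[j]=G_s[j]$ for some $s$ with $\max(0,t-T)\le s\le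 t$; strong fairness with parameter $\tau$ means every index lies in $S_t$ for some $t$ in every window of $\tau$ consecutive rounds. *)

theory Defs
  imports Main
begin

text \<open>States are vectors indexed by a finite type 'n (the n coordinates), with entries
in {0..m}; the order is the componentwise (pointwise) order on functions.
There is one function f i per coordinate i.\<close>

definition lat :: "nat \<Rightarrow> ('n \<Rightarrow> nat) set" where
  "lat m = {G. \<forall>k. G k \<le> m}"

definition top_state :: "nat \<Rightarrow> ('n \<Rightarrow> nat)" where
  "top_state m = (\<lambda>_. m)"

definition deflationary_on :: "('n \<Rightarrow> nat) set \<Rightarrow> (('n \<Rightarrow> nat) \<Rightarrow> ('n \<Rightarrow> nat)) \<Rightarrow> bool" where
  "deflationary_on L g \<longleftrightarrow> (\<forall>G\<in>L. g G \<le> G)"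

definition monotone_on_lat :: "('n \<Rightarrow> nat) set \<Rightarrow> (('n \<Rightarrow> nat) \<Rightarrow> ('n \<Rightarrow> nat)) \<Rightarrow> bool" where
  "monotone_on_lat L g \<longleftrightarrow> (\<forall>G\<in>L. \<forall>H\<in>L. G \<le> H \<longrightarrow> g G \<le> g H)"

definition local_on :: "('n \<Rightarrow> nat) set \<Rightarrow> 'n \<Rightarrow> (('n \<Rightarrow> nat) \<Rightarrow> ('n \<Rightarrow> nat)) \<Rightarrow> bool" where
  "local_on L i g \<longleftrightarrow> (\<forall>G\<in>L. \<forall>j. j \<noteq> i \<longrightarrow> g G j = G j)"

definition is_gcfp :: "('n \<Rightarrow> nat) set \<Rightarrow> ('n \<Rightarrow> ('n \<Rightarrow> nat) \<Rightarrow> ('n \<Rightarrow> nat)) \<Rightarrow> ('n \<Rightarrow> nat) \<Rightarrow> bool" where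
  "is_gcfp L f P \<longleftrightarrow> P \<in> L \<and> (\<forall>i. f i P = P) \<and>
     (\<forall>Q\<in>L. (\<forall>i. f i Q = Q) \<longrightarrow> Q \<le> P)"

definition eventually_const_at :: "(nat \<Rightarrow> 'a) \<Rightarrow> 'a \<Rightarrow> bool" where
  "eventually_const_at G P \<longleftrightarrow> (\<exists>t0. \<forall>t\<ge>t0. G t = P)"

definition fair :: "(nat \<Rightarrow> 'n set) \<Rightarrow> bool" where
  "fair S \<longleftrightarrow> (\<forall>i. infinite {t. i \<in> S t})"

definition strongly_fair :: "nat \<Rightarrow> (nat \<Rightarrow> 'n set) \<Rightarrow> bool" where
  "strongly_fair \<tau> S \<longleftrightarrow> (\<forall>i t0. \<exists>t. t0 \<le> t \<and> t < t0 + \<tau> \<and> i \<in> S t)"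

text \<open>In round t, each scheduled i reads the vector X t i and computes f i (X t i);
  it writes coordinate k iff the computed value differs from the value it read.
  Concurrency inside a round is modelled by a write-time ranking rank t: a read of
  coordinate k by i either returns the committed value G t k, or the value of a write
  to k by some scheduled j whose writes happen before i's write (rank t j < rank t i);
  since every function first reads and then writes, the reads-from relation of a
  round is acyclic, which the ranking expresses.\<close>

definition writes :: "('n \<Rightarrow> ('n \<Rightarrow> nat) \<Rightarrow> ('n \<Rightarrow> nat)) \<Rightarrow> ('n \<Rightarrow> nat) \<Rightarrow> 'n \<Rightarrow> 'n \<Rightarrow> bool" where
  "writes f Xj j k \<longleftrightarrow> f j Xj k \<noteq> Xj k"

definition nonint_exec ::
  "('n \<Rightarrow> ('n \<Rightarrow> nat) \<Rightarrow> ('n \<Rightarrow> nat)) \<Rightarrow> (nat \<Rightarrow> 'n set) \<Rightarrow> (nat \<Rightarrow> 'n \<Rightarrow> 'n \<Rightarrow> nat)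
    \<Rightarrow> (nat \<Rightarrow> 'n \<Rightarrow> nat) \<Rightarrow> (nat \<Rightarrow> 'n \<Rightarrow> nat) \<Rightarrow> bool" where
  "nonint_exec f S X rank G \<longleftrightarrow>
     (\<forall>t. \<forall>i\<in>S t. \<forall>k.
        X t i k = G t k \<or>
        (\<exists>j\<in>S t. rank t j < rank t i \<and> writes f (X t j) j k \<and> X t i k = f j (X t j) k)) \<and>
     (\<forall>t k. ((\<not>(\<exists>j\<in>S t. writes f (X t j) j k)) \<longrightarrow> G (Suc t) k = G t k) \<and>
            ((\<exists>j\<in>S t. writes f (X t j) j k) \<longrightarrow>
               (\<exists>j\<in>S t. writes f (X t j) j k \<and> G (Suc t) k = f j (X t j) k)))"

text \<open>Distributed execution: V t i is the view of i in round t.\<close>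
definition dist_exec ::
  "('n \<Rightarrow> ('n \<Rightarrow> nat) \<Rightarrow> ('n \<Rightarrow> nat)) \<Rightarrow> (nat \<Rightarrow> 'n set) \<Rightarrow> (nat \<Rightarrow> 'n \<Rightarrow> 'n \<Rightarrow> nat)
    \<Rightarrow> (nat \<Rightarrow> 'n \<Rightarrow> nat) \<Rightarrow> bool" where
  "dist_exec f S V G \<longleftrightarrow>
     (\<forall>t i. G (Suc t) i = (if i \<in> S t then f i (V t i) i else G t i))"

text \<open>Bounded staleness with parameter T (nat subtraction gives max(0, t - T)).\<close>
definition bounded_staleness ::
  "nat \<Rightarrow> (nat \<Rightarrow> 'n set) \<Rightarrow> (nat \<Rightarrow> 'n \<Rightarrow> 'n \<Rightarrow> nat) \<Rightarrow> (nat \<Rightarrow> 'n \<Rightarrow> nat) \<Rightarrow> bool" where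
  "bounded_staleness T S V G \<longleftrightarrow>
     (\<forall>t. \<forall>i\<in>S t. V t i i = G t i \<and>
        (\<forall>j. \<exists>s. t - T \<le> s \<and> s \<le> t \<and> V t i j = G s j))"

end

theory Submission
  imports Defs
begin

lemma stab:
  fixes G :: "nat \<Rightarrow> 'n::finite \<Rightarrow> nat"
  assumes dec: "\<And>t. G (Suc t) \<le> G t"
  shows "\<exists>t0. \<forall>t\<ge>t0. G t = G t0"
proof -
  define \<mu> where "\<mu> t = sum (G t) UNIV" for t
  obtain t0 where t0: "\<And>t. \<mu> t0 \<le> \<mu> t" using ex_has_least_nat[of "\<lambda>_. True" 0 \<mu>] by auto
  have anti: "G t \<le> G s" if "s \<le> t" for s t using that
    by (induction rule: dec_induct) (auto intro: order_trans dec)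
  show ?thesis
  proof (intro exI allI impI)
    fix t assume "t0 \<le> t"
    hence le: "G t \<le> G t0" by (rule anti)
    show "G t = G t0"
    proof (rule ccontr)
      assume "G t \<noteq> G t0"
      then obtain k where "G t k \<noteq> G t0 k" by auto
      with le have "G t k < G t0 k" by (simp add: le_fun_def order_less_le)
      hence "\<mu> t < \<mu> t0" unfolding \<mu>_def using le
        by (intro sum_strict_mono_ex1) (auto simp: le_fun_def)
      with t0[of t] show False by simp
    qed
  qed
qed

lemma reads_ok:
  fixes f :: "'n \<Rightarrow> ('n \<Rightarrow> nat) \<Rightarrow> ('n \<Rightarrow> nat)" and rk :: "'n \<Rightarrow> nat" and n :: nat
  assumes maps: "\<forall>i. \<forall>G\<in>lat m. f i G \<in> lat m"
    and mono: "\<forall>i. monotone_on_lat (lat m) (f i)"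
    and defl: "\<forall>i. deflationary_on (lat m) (f i)"
    and Gt: "Gt \<in> lat m"
    and rd: "\<forall>i\<in>St. \<forall>k. Xt i k = Gt k \<or>
        (\<exists>j\<in>St. rk j < rk i \<and> writes f (Xt j) j k \<and> Xt i k = f j (Xt j) k)"
  shows "\<forall>i\<in>St. rk i = n \<longrightarrow> Xt i \<in> lat m \<and> Xt i \<le> Gt \<and>
           (\<forall>R\<in>lat m. (\<forall>i. f i R = R) \<and> R \<le> Gt \<longrightarrow> R \<le> Xt i)"
proof (induction n rule: less_induct)
  case (less n)
  show ?case
  proof (intro ballI impI)
    fix i assume iS: "i \<in> St" and rn: "rk i = n"
    have c: "Xt i k \<le> m \<and> Xt i k \<le> Gt k \<and>
           (\<forall>R\<in>lat m. (\<forall>i. f i R = R) \<and> R \<le> Gt \<longrightarrow> R k \<le> Xt i k)" for k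
    proof (cases "Xt i k = Gt k")
      case True
      then show ?thesis using Gt by (auto simp: lat_def le_fun_def)
    next
      case False
      then obtain j where jS: "j \<in> St" and jr: "rk j < rk i" and xe: "Xt i k = f j (Xt j) k"
        using rd iS by blast
      have IH: "Xt j \<in> lat m \<and> Xt j \<le> Gt \<and>
           (\<forall>R\<in>lat m. (\<forall>i. f i R = R) \<and> R \<le> Gt \<longrightarrow> R \<le> Xt j)"
        using less.IH[of "rk j"] jr rn jS by auto
      have fl: "f j (Xt j) \<in> lat m" using maps IH by auto
      have fd: "f j (Xt j) \<le> Xt j" using defl IH by (auto simp: deflationary_on_def)
      have "Xt i k \<le> m" using fl xe by (auto simp: lat_def)
      moreover have "Xt i k \<le> Gt k" using fd IH xe by (auto simp: le_fun_def intro: order_trans)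
      moreover have "R k \<le> Xt i k" if "R \<in> lat m" "\<forall>i. f i R = R" "R \<le> Gt" for R
      proof -
        have RX: "R \<le> Xt j" using IH that by blast
        have "f j R \<le> f j (Xt j)" using mono that(1) IH RX unfolding monotone_on_lat_def by blast
        thus ?thesis using that xe by (auto simp: le_fun_def)
      qed
      ultimately show ?thesis by blast
    qed
    show "Xt i \<in> lat m \<and> Xt i \<le> Gt \<and>
           (\<forall>R\<in>lat m. (\<forall>i. f i R = R) \<and> R \<le> Gt \<longrightarrow> R \<le> Xt i)"
      using c by (auto simp: lat_def le_fun_def)
  qed
qed

theorem corollary2:
  fixes m :: nat and f :: "'n::finite \<Rightarrow> ('n \<Rightarrow> nat) \<Rightarrow> ('n \<Rightarrow> nat)"
  assumes maps: "\<forall>i. \<forall>G\<in>lat m. f i G \<in> lat m"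
    and mono: "\<forall>i. monotone_on_lat (lat m) (f i)"
    and defl: "\<forall>i. deflationary_on (lat m) (f i)"
  shows "(\<forall>S X rank G. G 0 = top_state m \<and> fair S \<and> nonint_exec f S X rank G \<longrightarrow>
            (\<exists>P. is_gcfp (lat m) f P \<and> eventually_const_at G P))
       \<and> ((\<forall>i. local_on (lat m) i (f i)) \<longrightarrow>
          (\<forall>S V G T \<tau>. G 0 = top_state m \<and> dist_exec f S V G \<and> bounded_staleness T S V G
              \<and> strongly_fair \<tau> S \<longrightarrow>
            (\<exists>P. is_gcfp (lat m) f P \<and> eventually_const_at G P)))"
proof (intro conjI allI impI)
  fix S X rank G
  assume A: "G 0 = top_state m \<and> fair S \<and> nonint_exec f S X rank G"
  have G0: "G 0 = top_state m" and fr: "fair S" using A by auto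
  have N: "nonint_exec f S X rank G" using A by blast
  note N' = N[unfolded nonint_exec_def]
  have rd: "\<forall>t. \<forall>i\<in>S t. \<forall>k. X t i k = G t k \<or>
        (\<exists>j\<in>S t. rank t j < rank t i \<and> writes f (X t j) j k \<and> X t i k = f j (X t j) k)"
    using N' by (rule conjunct1)
  have cm: "\<forall>t k. ((\<not>(\<exists>j\<in>S t. writes f (X t j) j k)) \<longrightarrow> G (Suc t) k = G t k) \<and>
            ((\<exists>j\<in>S t. writes f (X t j) j k) \<longrightarrow>
               (\<exists>j\<in>S t. writes f (X t j) j k \<and> G (Suc t) k = f j (X t j) k))"
    using N' by (rule conjunct2)
  have RO: "\<forall>i\<in>S t. X t i \<in> lat m \<and> X t i \<le> G t \<and>
           (\<forall>R\<in>lat m. (\<forall>i. f i R = R) \<and> R \<le> G t \<longrightarrow> R \<le> X t i)"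
    if Gt0: "G t \<in> lat m" for t
  proof (intro ballI)
    fix i assume iS: "i \<in> S t"
    have H: "\<forall>i\<in>S t. rank t i = rank t i0 \<longrightarrow> X t i \<in> lat m \<and> X t i \<le> G t \<and>
           (\<forall>R\<in>lat m. (\<forall>i. f i R = R) \<and> R \<le> G t \<longrightarrow> R \<le> X t i)" for i0
      by (rule reads_ok[OF maps mono defl Gt0 spec[OF rd, of t]])
    show "X t i \<in> lat m \<and> X t i \<le> G t \<and>
           (\<forall>R\<in>lat m. (\<forall>i. f i R = R) \<and> R \<le> G t \<longrightarrow> R \<le> X t i)"
      using H[of i] iS by blast
  qed
  have step: "G (Suc t) \<in> lat m \<and> G (Suc t) \<le> G t \<and>
      (\<forall>R\<in>lat m. (\<forall>i. f i R = R) \<and> R \<le> G t \<longrightarrow> R \<le> G (Suc t))"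
    if Gt: "G t \<in> lat m" for t
  proof -
    have c: "G (Suc t) k \<le> G t k \<and>
      (\<forall>R\<in>lat m. (\<forall>i. f i R = R) \<and> R \<le> G t \<longrightarrow> R k \<le> G (Suc t) k)" for k
    proof (cases "\<exists>j\<in>S t. writes f (X t j) j k")
      case False
      then show ?thesis using cm by (auto simp: le_fun_def)
    next
      case True
      then obtain j where jS: "j \<in> S t" and ge: "G (Suc t) k = f j (X t j) k" using cm by blast
      have IH: "X t j \<in> lat m \<and> X t j \<le> G t \<and>
           (\<forall>R\<in>lat m. (\<forall>i. f i R = R) \<and> R \<le> G t \<longrightarrow> R \<le> X t j)" using RO[OF Gt] jS by blast
      have fd: "f j (X t j) \<le> X t j" using defl IH by (auto simp: deflationary_on_def)
      have "G (Suc t) k \<le> G t k" using fd IH ge by (auto simp: le_fun_def intro: order_trans)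
      moreover have "R k \<le> G (Suc t) k" if "R \<in> lat m" "\<forall>i. f i R = R" "R \<le> G t" for R
      proof -
        have RX: "R \<le> X t j" using IH that by blast
        have "f j R \<le> f j (X t j)" using mono that(1) IH RX unfolding monotone_on_lat_def by blast
        thus ?thesis using that ge by (auto simp: le_fun_def)
      qed
      ultimately show ?thesis by blast
    qed
    show ?thesis using c Gt by (auto simp: lat_def le_fun_def intro: order_trans)
  qed
  have inv: "G t \<in> lat m \<and> (\<forall>R\<in>lat m. (\<forall>i. f i R = R) \<longrightarrow> R \<le> G t)" for t
  proof (induction t)
    case 0
    then show ?case using G0 by (auto simp: lat_def top_state_def le_fun_def)
  next
    case (Suc t)
    then show ?case using step[of t] by blast
  qed
  have dec: "G (Suc t) \<le> G t" for t using step[OF conjunct1[OF inv[of t]]] by blast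
  obtain t0 where t0: "\<forall>t\<ge>t0. G t = G t0" using stab[of G, OF dec] by blast
  define Q where "Q = G t0"
  have fixQ: "f i Q = Q" for i
  proof -
    have "infinite {t. i \<in> S t}" using fr by (auto simp: fair_def)
    then have "\<not> (\<forall>n\<in>{t. i \<in> S t}. n < t0)" using finite_nat_set_iff_bounded by blast
    then obtain t where t1: "t \<in> {t. i \<in> S t}" and t2: "\<not> t < t0" by blast
    from t1 have iS: "i \<in> S t" by simp
    from t2 have tt: "t0 \<le> t" by simp
    have Gt: "G t = Q" using t0 tt unfolding Q_def by blast
    have tt': "t0 \<le> Suc t" using tt by simp
    have Gs: "G (Suc t) = Q" using t0 tt' unfolding Q_def by blast
    have nw: "\<not> writes f (X t j) j k" if "j \<in> S t" for j k
    proof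
      assume wj: "writes f (X t j) j k"
      have cmtk: "(\<exists>j\<in>S t. writes f (X t j) j k) \<longrightarrow>
               (\<exists>j\<in>S t. writes f (X t j) j k \<and> G (Suc t) k = f j (X t j) k)"
        using spec[OF spec[OF cm, of t], of k] by (rule conjunct2)
      have "\<exists>j\<in>S t. writes f (X t j) j k" using wj that by blast
      with cmtk obtain j' where jS: "j' \<in> S t" and w: "writes f (X t j') j' k"
         and ge: "G (Suc t) k = f j' (X t j') k" by blast
      have IH: "X t j' \<in> lat m \<and> X t j' \<le> G t" using RO[OF conjunct1[OF inv[of t]]] jS by blast
      have fd: "f j' (X t j') \<le> X t j'" using defl IH by (auto simp: deflationary_on_def)
      have "f j' (X t j') k < X t j' k" using fd w by (auto simp: writes_def le_fun_def order_less_le)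
      also have "\<dots> \<le> G t k" using IH by (auto simp: le_fun_def)
      finally show False using ge Gt Gs by simp
    qed
    have "X t i = Q"
    proof
      fix k
      have "X t i k = G t k \<or> (\<exists>j\<in>S t. rank t j < rank t i \<and> writes f (X t j) j k \<and> X t i k = f j (X t j) k)"
        using rd iS by blast
      then show "X t i k = Q k" using nw Gt by auto
    qed
    then show ?thesis using nw[OF iS] by (auto simp: writes_def)
  qed
  have "is_gcfp (lat m) f Q" unfolding is_gcfp_def using fixQ inv Q_def by blast
  moreover have "eventually_const_at G Q" unfolding eventually_const_at_def Q_def using t0 by blast
  ultimately show "\<exists>P. is_gcfp (lat m) f P \<and> eventually_const_at G P" by blast
next
  fix S V G T \<tau>
  assume loc: "\<forall>i. local_on (lat m) i (f i)"
    and A: "G 0 = top_state m \<and> dist_exec f S V G \<and> bounded_staleness T S V G \<and> strongly_fair \<tau> S"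
  have G0: "G 0 = top_state m" and sf: "strongly_fair \<tau> S" using A by auto
  have de: "\<And>t i. G (Suc t) i = (if i \<in> S t then f i (V t i) i else G t i)"
    using A by (auto simp: dist_exec_def)
  have bs: "\<forall>t. \<forall>i\<in>S t. V t i i = G t i \<and> (\<forall>j. \<exists>s. t - T \<le> s \<and> s \<le> t \<and> V t i j = G s j)"
    using A by (auto simp: bounded_staleness_def)
  define good where "good H \<longleftrightarrow> H \<in> lat m \<and> (\<forall>R\<in>lat m. (\<forall>i. f i R = R) \<longrightarrow> R \<le> H)" for H
  have Vgood: "good (V t i)" if iS: "i \<in> S t" and allg: "\<forall>s\<le>t. good (G s)" for t i
  proof -
    have ex: "\<exists>s\<le>t. V t i j = G s j" for j using bs iS by blast
    have cj: "V t i j \<le> m \<and> (\<forall>R\<in>lat m. (\<forall>i. f i R = R) \<longrightarrow> R j \<le> V t i j)" for j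
    proof -
      obtain s where s1: "s \<le> t" and s2: "V t i j = G s j" using ex by blast
      then have "good (G s)" using allg by blast
      then show ?thesis using s2 by (auto simp: good_def lat_def le_fun_def)
    qed
    show ?thesis using cj by (auto simp: good_def lat_def le_fun_def)
  qed
  have inv: "\<forall>s\<le>t. good (G s)" for t
  proof (induction t)
    case 0
    then show ?case using G0 by (auto simp: good_def lat_def top_state_def le_fun_def)
  next
    case (Suc t)
    have "good (G (Suc t))" unfolding good_def
    proof (intro conjI ballI impI)
      have c: "G (Suc t) k \<le> m \<and> (\<forall>R\<in>lat m. (\<forall>i. f i R = R) \<longrightarrow> R k \<le> G (Suc t) k)" for k
      proof (cases "k \<in> S t")
        case False
        then show ?thesis using Suc de[of t k] by (auto simp: good_def lat_def le_fun_def)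
      next
        case True
        have Vg: "good (V t k)" using Vgood[OF True Suc] .
        have "f k (V t k) \<in> lat m" using maps Vg by (auto simp: good_def)
        moreover have "R k \<le> f k (V t k) k" if "R \<in> lat m" "\<forall>i. f i R = R" for R
        proof -
          have RV: "R \<le> V t k" using Vg that unfolding good_def by blast
          have Vl: "V t k \<in> lat m" using Vg unfolding good_def by blast
          have "f k R \<le> f k (V t k)" using mono that(1) Vl RV unfolding monotone_on_lat_def by blast
          thus ?thesis using that by (auto simp: le_fun_def)
        qed
        ultimately show ?thesis using True de[of t k] by (auto simp: lat_def)
      qed
      show "G (Suc t) \<in> lat m" using c by (auto simp: lat_def)
      show "R \<le> G (Suc t)" if "R \<in> lat m" "\<forall>i. f i R = R" for R
        using c that by (auto simp: le_fun_def)
    qed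
    then show ?case using Suc by (auto simp: le_Suc_eq)
  qed
  have dec: "G (Suc t) \<le> G t" for t
  proof -
    have "G (Suc t) i \<le> G t i" for i
    proof (cases "i \<in> S t")
      case True
      have Vg: "good (V t i)" using Vgood[OF True inv] .
      have "f i (V t i) \<le> V t i" using defl Vg by (auto simp: good_def deflationary_on_def)
      moreover have "V t i i = G t i" using bs True by blast
      ultimately show ?thesis using True de[of t i] by (metis le_fun_def)
    next
      case False then show ?thesis using de[of t i] by simp
    qed
    thus ?thesis by (simp add: le_fun_def)
  qed
  obtain t0 where t0: "\<forall>t\<ge>t0. G t = G t0" using stab[of G, OF dec] by blast
  define Q where "Q = G t0"
  have fixQ: "f i Q = Q" for i
  proof -
    have "\<exists>t. t0 + T \<le> t \<and> t < t0 + T + \<tau> \<and> i \<in> S t"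
      using sf unfolding strongly_fair_def by blast
    then obtain t where tt: "t0 + T \<le> t" and iS: "i \<in> S t" by blast
    have VQ: "V t i = Q"
    proof
      fix j
      obtain s where "t - T \<le> s" "s \<le> t" "V t i j = G s j" using bs iS by blast
      then have "t0 \<le> s" using tt by linarith
      then have "G s = Q" using t0 unfolding Q_def by blast
      then show "V t i j = Q j" using \<open>V t i j = G s j\<close> by simp
    qed
    have "G (Suc t) i = f i Q i" using de[of t i] iS VQ by simp
    moreover have "t0 \<le> Suc t" using tt by linarith
    then have "G (Suc t) = Q" using t0 unfolding Q_def by blast
    ultimately have ii: "f i Q i = Q i" by simp
    have "Q \<in> lat m" using inv Q_def good_def by blast
    then have "f i Q j = Q j" if "j \<noteq> i" for j using loc that by (auto simp: local_on_def)
    then show ?thesis using ii by (metis ext)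
  qed
  have "is_gcfp (lat m) f Q" unfolding is_gcfp_def using fixQ inv Q_def good_def by blast
  moreover have "eventually_const_at G Q" unfolding eventually_const_at_def Q_def using t0 by blast
  ultimately show "\<exists>P. is_gcfp (lat m) f P \<and> eventually_const_at G P" by blast
qed

end
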